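(* Let $p>2$ be a prime and let $a,b\in\mathbb{C}_p$ with $a\neq0$, $b\neq0$, $a\neq b$, $|2a|_p=|b|_p$ and $|2a-b|_p<|a|_p$. Let $P=-\frac1b$, $D=\mathbb{C}_p\setminus\{P\}$, $f(x)=\frac{ax^2}{bx+1}$ on $D$, $x_1=0$, $x_2=\frac1{a-b}$, and $r_0=\frac{1}{|b|_p}$. Then $x_1$ and $x_2$ are attracting fixed points of $f$, and $$A(x_1)=B_{r_0}(x_1),\qquad A(x_2)=B_{r_0}(x_2).$$
   Context: $\mathbb{C}_p$ is the field of complex $p$-adic numbers with $p$-adic norm $|\cdot|_p$. For $c\in\mathbb{C}_p$, $r>0$: $B_r(c)=\{x:|x-c|_p<r\}$. For $y\in D$, $y^{(n)}=f^n(y)$ is the $n$-th iterate (defined as long as no earlier iterate equals $P$). A fixed point $x^{(0)}$ of $f$ is attracting if $|f'(x^{(0)})|_p<1$. Its basin of attraction is $A(x^{(0)})=\{y: y^{(n)}\text{ defined for all }n,\ y^{(n)}\to x^{(0)}\}$. *)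

theory Defs
  imports Complex_Main "HOL-Computational_Algebra.Polynomial" "HOL-Computational_Algebra.Primes"
begin

text \<open>We characterise C_p
  (up to isometric isomorphism) as a field with an absolute value that is
  non-archimedean, extends the p-adic absolute value (normalised by |p| = 1/p),
  is complete, algebraically closed, and in which the algebraic numbers
  (roots of nonzero integer polynomials) are dense.\<close>

definition is_abs_value :: "('a::field \<Rightarrow> real) \<Rightarrow> bool" where
  "is_abs_value N \<longleftrightarrow>
     (\<forall>x. N x \<ge> 0) \<and> (\<forall>x. N x = 0 \<longleftrightarrow> x = 0) \<and>
     (\<forall>x y. N (x * y) = N x * N y) \<and>
     (\<forall>x y. N (x + y) \<le> max (N x) (N y))"

definition abs_complete :: "('a::field \<Rightarrow> real) \<Rightarrow> bool" where
  "abs_complete N \<longleftrightarrow>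
     (\<forall>s::nat \<Rightarrow> 'a. (\<forall>e>0. \<exists>M. \<forall>m\<ge>M. \<forall>n\<ge>M. N (s m - s n) < e)
        \<longrightarrow> (\<exists>l. (\<lambda>n. N (s n - l)) \<longlonglongrightarrow> 0))"

definition alg_closed_field :: "'a::field itself \<Rightarrow> bool" where
  "alg_closed_field _ \<longleftrightarrow> (\<forall>q::'a poly. degree q > 0 \<longrightarrow> (\<exists>x. poly q x = 0))"

definition algebraic_over_Q :: "'a::field_char_0 \<Rightarrow> bool" where
  "algebraic_over_Q x \<longleftrightarrow> (\<exists>q::int poly. q \<noteq> 0 \<and> poly (map_poly of_int q) x = 0)"

definition is_Cp :: "nat \<Rightarrow> ('a::field_char_0 \<Rightarrow> real) \<Rightarrow> bool" where
  "is_Cp p N \<longleftrightarrow> prime p \<and> is_abs_value N \<and> N (of_nat p) = 1 / real p \<and>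
     abs_complete N \<and> alg_closed_field TYPE('a) \<and>
     (\<forall>x. \<forall>e>0. \<exists>y. algebraic_over_Q y \<and> N (x - y) < e)"

definition pball :: "('a::field \<Rightarrow> real) \<Rightarrow> 'a \<Rightarrow> real \<Rightarrow> 'a set" where
  "pball N c r = {x. N (x - c) < r}"

definition has_pderiv :: "('a::field \<Rightarrow> real) \<Rightarrow> 'a set \<Rightarrow> ('a \<Rightarrow> 'a) \<Rightarrow> 'a \<Rightarrow> 'a \<Rightarrow> bool" where
  "has_pderiv N D f x d \<longleftrightarrow> x \<in> D \<and>
     (\<forall>e>0. \<exists>\<delta>>0. \<forall>y\<in>D. 0 < N (y - x) \<and> N (y - x) < \<delta> \<longrightarrow>
        N ((f y - f x) / (y - x) - d) < e)"

definition attracting_fixed_point ::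
  "('a::field \<Rightarrow> real) \<Rightarrow> 'a set \<Rightarrow> ('a \<Rightarrow> 'a) \<Rightarrow> 'a \<Rightarrow> bool" where
  "attracting_fixed_point N D f x0 \<longleftrightarrow> x0 \<in> D \<and> f x0 = x0 \<and>
     (\<exists>d. has_pderiv N D f x0 d \<and> N d < 1)"

definition basin :: "('a::field \<Rightarrow> real) \<Rightarrow> 'a set \<Rightarrow> ('a \<Rightarrow> 'a) \<Rightarrow> 'a \<Rightarrow> 'a set" where
  "basin N D f x0 = {y. (\<forall>n. (f ^^ n) y \<in> D) \<and> (\<lambda>n. N ((f ^^ n) y - x0)) \<longlonglongrightarrow> 0}"

end

theory Submission
  imports Defs
begin

lemma i1:
  fixes a b x x2 :: "'a::field_char_0"
  assumes "b*x+1 \<noteq> 0" "x2*(a-b) = 1"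
  shows "a * x^2/(b*x+1) - x2 = (x - x2) * (a*x+1)/(b*x+1)"
proof -
  have "a * x^2 - x2*(b*x+1) = (x - x2) * (a*x+1)"
  proof -
    have "(x - x2) * (a*x+1) - (a * x^2 - x2*(b*x+1)) = x * (1 - x2*(a-b))"
      by (simp add: algebra_simps power2_eq_square)
    then show ?thesis using assms(2) by simp
  qed
  then show ?thesis using assms(1) by (simp add: field_simps)
qed

lemma i2:
  fixes a b x x2 :: "'a::field_char_0"
  assumes "x2*(a-b) = 1"
  shows "a*x+1 = a*(x - x2) + (2*a-b)*x2"
proof -
  have "a*(x - x2) + (2*a-b)*x2 = a*x + x2*(a-b)" by (simp add: algebra_simps)
  then show ?thesis using assms by simp
qed

lemma i3:
  fixes a b y x2 :: "'a::field_char_0"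
  assumes "b*y+1 \<noteq> 0" "x2*(a-b) = 1" "a \<noteq> 0" 
  shows "(a*y+1)/(b*y+1) - (2*a-b)/a = (a-b)^2 * (y - x2) / (a*(b*y+1))"
proof -
  have "a*(a*y+1) - (2*a-b)*(b*y+1) = (a-b)^2 * (y - x2)"
  proof -
    have "(a-b)^2 * (y - x2) - (a*(a*y+1) - (2*a-b)*(b*y+1)) = (a-b) * (1 - x2*(a-b))"
      by (simp add: algebra_simps power2_eq_square)
    then show ?thesis using assms(2) by simp
  qed
  then show ?thesis using assms by (simp add: field_simps)
qed

lemma i4:
  fixes a b x2 :: "'a::field_char_0"
  assumes "x2*(a-b) = 1" "a \<noteq> 0"
  shows "b*x2+1 = a*x2" "a * x2^2/(b*x2+1) = x2" 
proof -
  show 1: "b*x2+1 = a*x2" using assms by (simp add: algebra_simps)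
  have "x2 \<noteq> 0" using assms by auto 
  then show "a * x2^2/(b*x2+1) = x2" unfolding 1 using assms by (simp add: power2_eq_square)
qed

lemma geo:
  fixes s :: "nat \<Rightarrow> real"
  assumes "0 \<le> q" "q < 1" "\<And>n. 0 \<le> s n \<and> s n \<le> q^n * t"
  shows "s \<longlonglongrightarrow> 0"
proof (rule tendsto_sandwich[of "\<lambda>_. 0" s _ "\<lambda>n. q^n * t"])
  show "\<forall>\<^sub>F n in sequentially. 0 \<le> s n" using assms by auto
  show "\<forall>\<^sub>F n in sequentially. s n \<le> q^n * t" using assms by auto
  show "(\<lambda>n. q^n * t) \<longlonglongrightarrow> 0"
    using LIMSEQ_power_zero[of q] assms by (auto intro: tendsto_mult_left_zero)
qed auto

context
  fixes N :: "'a::field_char_0 \<Rightarrow> real"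
  assumes A: "is_abs_value N"
begin

lemma N_nonneg: "N x \<ge> 0" using A unfolding is_abs_value_def by auto
lemma N_zero: "N x = 0 \<longleftrightarrow> x = 0" using A unfolding is_abs_value_def by auto
lemma N_mult: "N (x*y) = N x * N y" using A unfolding is_abs_value_def by auto
lemma N_add: "N (x+y) \<le> max (N x) (N y)" using A unfolding is_abs_value_def by auto

lemma N_0: "N 0 = 0" using N_zero by simp

lemma N_1: "N 1 = 1"
proof -
  have "N 1 = N 1 * N 1" using N_mult[of 1 1] by simp
  moreover have "N 1 \<noteq> 0" using N_zero by simp
  ultimately show ?thesis by simp
qed

lemma N_minus: "N (-x) = N x"
proof -
  have "N (-1) * N (-1) = 1" using N_mult[of "-1" "-1"] N_1 by simp
  then have "N (-1) = 1" using N_nonneg[of "-1"]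
  proof -
    assume h: "N (-1) * N (-1) = 1"
    have "(N (-1) - 1) * (N (-1) + 1) = 0" using h by (simp add: algebra_simps)
    moreover have "N (-1) + 1 > 0" using N_nonneg[of "-1"] by simp
    ultimately show ?thesis by simp
  qed
  then show ?thesis using N_mult[of "-1" x] by simp
qed

lemma N_diff: "N (x-y) \<le> max (N x) (N y)"
  using N_add[of x "-y"] N_minus[of y] by simp

lemma N_div: "N (x / y) = N x / N y"
proof (cases "y = 0")
  case True then show ?thesis using N_0 by simp
next
  case False
  have "N (x/y) * N y = N x" using N_mult[of "x/y" y] False by simp
  then show ?thesis using False N_zero[of y] by (simp add: field_simps)
qed

lemma N_pow: "N (x^n) = N x ^ n"
  by (induction n) (simp_all add: N_1 N_mult)

lemma N_add_eq: assumes "N x < N y" shows "N (x+y) = N y"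
proof -
  have "N (x+y) \<le> N y" using N_add[of x y] assms by simp
  moreover have "N y \<le> max (N (x+y)) (N x)" using N_diff[of "x+y" x] by simp
  ultimately show ?thesis using assms by auto
qed

lemma N_of_nat: "N (of_nat n) \<le> 1"
proof (induction n)
  case 0 then show ?case using N_0 by simp
next
  case (Suc n) then show ?case using N_add[of "of_nat n" 1] N_1 by (simp add: add.commute)
qed

lemma N_two: assumes "prime p" "p > 2" "N (of_nat p) = 1 / real p" shows "N 2 = 1"
proof (rule ccontr)
  assume ne: "N 2 \<noteq> 1"
  have "N 2 \<le> 1" using N_of_nat[of 2] by simp
  with ne have lt: "N 2 < 1" by simp
  have "odd p" using prime_odd_nat assms by blast
  then obtain m where pm: "p = 2*m+1" using oddE by blast
  have "(1::'a) = of_nat p - 2 * of_nat m" using pm by simp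
  then have "N 1 \<le> max (N (of_nat p)) (N (2 * of_nat m))" using N_diff by metis
  moreover have "N (of_nat p) < 1" using assms by simp
  moreover have "N (2 * of_nat m) < 1"
    using N_mult[of 2 "of_nat m"] N_of_nat[of m] lt N_nonneg[of 2] N_nonneg[of "of_nat m"]
    by (metis dual_order.strict_trans2 mult_left_le mult_less_cancel_right1 not_less)
  ultimately show False using N_1 by simp
qed

end

theorem theorem3p9:
  fixes p :: nat and N :: "'a::field_char_0 \<Rightarrow> real" and a b :: 'a
  assumes Cp: "is_Cp p N"
    and p2: "p > 2"
    and a0: "a \<noteq> 0" and b0: "b \<noteq> 0" and ab: "a \<noteq> b"
    and h1: "N (2 * a) = N b"
    and h2: "N (2 * a - b) < N a"
  defines "P \<equiv> - 1 / b"
    and "D \<equiv> UNIV - {- 1 / b}"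
    and "f \<equiv> (\<lambda>x. a * x ^ 2 / (b * x + 1))"
    and "x1 \<equiv> 0"
    and "x2 \<equiv> 1 / (a - b)"
    and "r0 \<equiv> 1 / N b"
  shows "attracting_fixed_point N D f x1 \<and> attracting_fixed_point N D f x2 \<and>
         basin N D f x1 = pball N x1 r0 \<and> basin N D f x2 = pball N x2 r0"
proof -
  have A: "is_abs_value N" and pr: "prime p" and Np: "N (of_nat p) = 1 / real p"
    using Cp unfolding is_Cp_def by auto
  note Nn = N_nonneg[OF A] and Nz = N_zero[OF A] and Nm = N_mult[OF A]
    and Nad = N_add[OF A] and N1 = N_1[OF A] and Nmi = N_minus[OF A]
    and Ndf = N_diff[OF A] and Ndv = N_div[OF A] and Npw = N_pow[OF A]
    and Nae = N_add_eq[OF A] and N0 = N_0[OF A]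
  have N2: "N 2 = 1" using N_two[OF A pr p2 Np] .
  define R where "R = N b"
  have Na: "N a = R" using h1 N2 Nm[of 2 a] R_def by simp
  have R0: "R > 0" using Nz[of b] Nn[of b] b0 R_def by auto
  have Nab: "N (a-b) = R"
  proof -
    have "a - b = (2*a-b) + (-a)" by simp
    moreover have "N (2*a-b) < N (-a)" using h2 Nmi by simp
    ultimately show ?thesis using Nae Nmi Na by metis
  qed
  have abz: "a - b \<noteq> 0" using ab by simp
  define k where "k = N (2*a-b) / R"
  have k0: "0 \<le> k" and k1: "k < 1" using Nn[of "2*a-b"] R0 h2 Na unfolding k_def by auto
  have x2e: "x2*(a-b) = 1" unfolding x2_def using abz by simp
  have r0R: "r0 = 1/R" unfolding r0_def R_def ..
  have r0p: "r0 > 0" using R0 r0R by simp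
  have Rr0: "R * r0 = 1" using R0 r0R by simp
  have Nx2: "N x2 = r0" unfolding x2_def using Ndv[of 1 "a-b"] N1 Nab r0R by simp
  have Dm: "\<And>x. x \<in> D \<longleftrightarrow> b*x+1 \<noteq> 0"
  proof -
    fix x
    have "x = -1/b \<longleftrightarrow> b*x = -1"
    proof
      assume "x = -1/b" then show "b*x = -1" using b0 by simp
    next
      assume h: "b*x = -1" have "x = (b*x)/b" using b0 by simp
      then show "x = -1/b" using h by simp
    qed
    also have "\<dots> \<longleftrightarrow> b*x+1 = 0" by (rule eq_neg_iff_add_eq_0)
    finally show "x \<in> D \<longleftrightarrow> b*x+1 \<noteq> 0" unfolding D_def by auto
  qed
  have fx: "\<And>x. f x = a * x^2/(b*x+1)" unfolding f_def ..
  have fx2: "f x2 = x2" using i4(2)[OF x2e a0] fx by simp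
  have bx2: "b*x2+1 = a*x2" using i4(1)[OF x2e a0] .
  have Nax2: "N (a*x2) = 1" using Nm Na Nx2 Rr0 by simp
  have N2x2: "N ((2*a-b)*x2) = k" using Nm Nx2 r0R k_def by simp
  have S1: "\<And>x. N x < r0 \<Longrightarrow> b*x+1 \<noteq> 0 \<and> N (f x) = R * N x ^2"
  proof -
    fix x assume hx: "N x < r0"
    have "N (b*x) < N 1" using Nm[of b x] R_def hx N1 Rr0 R0
      by (metis mult_strict_left_mono)
    then have e: "N (b*x+1) = 1" using Nae N1 by metis
    then have "b*x+1 \<noteq> 0" using N0 by auto
    moreover have "N (f x) = R * N x ^2" using fx Ndv Nm Npw e Na by simp
    ultimately show "b*x+1 \<noteq> 0 \<and> N (f x) = R * N x ^2" ..
  qed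
  have S2: "\<And>x. N (x-x2) < r0 \<Longrightarrow> b*x+1 \<noteq> 0 \<and> N (f x - x2) \<le> N (x-x2) * max k (R * N (x-x2))"
  proof -
    fix x assume hx: "N (x-x2) < r0"
    have lt: "R * N (x-x2) < 1" using hx R0 Rr0 by (metis mult_strict_left_mono)
    have "N (b*(x-x2)) < N (a*x2)" using Nm[of b "x-x2"] R_def lt Nax2 by simp
    moreover have "b*x+1 = b*(x-x2) + a*x2" using bx2 by (simp add: algebra_simps)
    ultimately have e: "N (b*x+1) = 1" using Nae Nax2 by metis
    then have nz: "b*x+1 \<noteq> 0" using N0 by auto
    have "N (a*x+1) \<le> max (N (a*(x-x2))) (N ((2*a-b)*x2))"
      using i2[OF x2e, of x] Nad by metis
    then have ax: "N (a*x+1) \<le> max k (R * N (x-x2))" using Nm Na N2x2 by auto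
    have "f x - x2 = (x - x2) * (a*x+1)/(b*x+1)" using i1[OF nz x2e] fx by simp
    then have "N (f x - x2) = N (x-x2) * N (a*x+1)" using Ndv Nm e by simp
    also have "\<dots> \<le> N (x-x2) * max k (R * N (x-x2))" using ax Nn by (simp add: mult_left_mono)
    finally show "b*x+1 \<noteq> 0 \<and> N (f x - x2) \<le> N (x-x2) * max k (R * N (x-x2))" using nz by simp
  qed
  have SC: "\<And>x. b*x+1 \<noteq> 0 \<Longrightarrow> N x \<ge> r0 \<Longrightarrow> N (x-x2) \<ge> r0 \<Longrightarrow> N (f x) \<ge> r0 \<and> N (f x - x2) \<ge> r0"
  proof -
    fix x assume nz: "b*x+1 \<noteq> 0" and hx: "N x \<ge> r0" and hx2: "N (x-x2) \<ge> r0"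
    have fe: "N (f x) = R * N x ^ 2 / N (b*x+1)" using fx Ndv Nm Npw Na by simp
    have fe2: "N (f x - x2) = N (x-x2) * N (a*x+1) / N (b*x+1)"
      using i1[OF nz x2e] fx Ndv Nm by simp
    have Nbp: "N (b*x+1) > 0" using nz Nz Nn by (metis less_eq_real_def)
    show "N (f x) \<ge> r0 \<and> N (f x - x2) \<ge> r0"
    proof (cases "N (b*x+1) \<le> 1")
      case True
      have "R * N x \<ge> 1" using hx R0 Rr0 by (metis mult_left_mono less_eq_real_def)
      then have "R * N x ^ 2 \<ge> N x" using Nn[of x] by (simp add: power2_eq_square)
        (metis mult.assoc mult_le_cancel_right1 mult.commute less_eq_real_def mult_cancel_right1 not_le)
      then have "R * N x ^ 2 \<ge> r0" using hx by simp
      moreover have "R * N x ^ 2 / N (b*x+1) \<ge> R * N x ^ 2"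
        using True Nbp R0 Nn[of x] by (simp add: le_divide_eq mult_left_le)
      ultimately have g1: "N (f x) \<ge> r0" using fe by simp
      have "R * N (x-x2) \<ge> 1" using hx2 R0 Rr0 by (metis mult_left_mono less_eq_real_def)
      then have "N ((2*a-b)*x2) < N (a*(x-x2))" using N2x2 k1 Nm Na by simp
      then have "N (a*x+1) = N (a*(x-x2))" using Nae i2[OF x2e, of x] by (metis add.commute)
      then have "N (a*x+1) \<ge> 1" using \<open>R * N (x-x2) \<ge> 1\<close> Nm Na by simp
      then have "N (x-x2) * N (a*x+1) \<ge> N (x-x2)" using Nn[of "x-x2"]
        by (metis mult_left_mono mult.right_neutral)
      moreover have "N (x-x2) * N (a*x+1) / N (b*x+1) \<ge> N (x-x2) * N (a*x+1)"
        using True Nbp Nn[of "x-x2"] Nn[of "a*x+1"] by (simp add: le_divide_eq mult_left_le)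
      ultimately have "N (f x - x2) \<ge> r0" using fe2 hx2 by simp
      with g1 show ?thesis ..
    next
      case False
      have "N (b*x+1) \<le> max (N (b*x)) (N 1)" using Nad .
      then have bxg: "N (b*x) > 1" using False N1 by auto
      then have eb: "N (b*x+1) = N (b*x)" using Nae N1 by (metis add.commute)
      have "N (a*x) > N 1" using bxg Nm Na R_def N1 by simp
      then have ea: "N (a*x+1) = N (a*x)" using Nae by (metis add.commute)
      have NaxNbx: "N (a*x) = N (b*x)" using Nm Na R_def by simp
      have Nxp: "N x > 0" using hx r0p by simp
      have "N (f x) = N x" using fe eb Nm R_def R0 Nxp by (simp add: power2_eq_square)
      moreover have "N (f x - x2) = N (x-x2)" using fe2 ea eb NaxNbx bxg by simp
      ultimately show ?thesis using hx hx2 by simp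
    qed
  qed
  have L1: "\<And>x. b*x+1 \<noteq> 0 \<Longrightarrow> N x \<ge> r0 \<Longrightarrow> N (f x) \<ge> r0"
  proof -
    fix x assume nz: "b*x+1 \<noteq> 0" and hx: "N x \<ge> r0"
    show "N (f x) \<ge> r0"
    proof (cases "N (x-x2) < r0")
      case True
      have "R * N (x-x2) < 1" using True R0 Rr0 by (metis mult_strict_left_mono)
      then have m: "max k (R * N (x-x2)) \<le> 1" using k1 by simp
      have "N (f x - x2) \<le> N (x-x2) * max k (R * N (x-x2))" using S2[OF True] by simp
      also have "\<dots> \<le> N (x-x2)" using m Nn[of "x-x2"] by (metis mult_left_mono mult.right_neutral)
      finally have "N (f x - x2) < N x2" using True Nx2 by simp
      then have "N ((f x - x2) + x2) = N x2" using Nae by metis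
      then show ?thesis using Nx2 by simp
    next
      case False then show ?thesis using SC nz hx by simp
    qed
  qed
  have L2: "\<And>x. b*x+1 \<noteq> 0 \<Longrightarrow> N (x-x2) \<ge> r0 \<Longrightarrow> N (f x - x2) \<ge> r0"
  proof -
    fix x assume nz: "b*x+1 \<noteq> 0" and hx: "N (x-x2) \<ge> r0"
    show "N (f x - x2) \<ge> r0"
    proof (cases "N x < r0")
      case True
      have "R * N x < 1" using True R0 Rr0 by (metis mult_strict_left_mono)
      then have "R * N x ^ 2 \<le> N x" using Nn[of x] by (simp add: power2_eq_square)
        (metis mult.assoc mult_left_le_one_le mult.commute less_eq_real_def Nn R0 zero_le_mult_iff)
      then have "N (f x) < N (-x2)" using S1[OF True] True Nx2 Nmi by simp
      then have "N (f x + (-x2)) = N (-x2)" using Nae by metis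
      then show ?thesis using Nx2 Nmi by simp
    next
      case False then show ?thesis using SC nz hx by simp
    qed
  qed
  have it: "\<And>n y. (f ^^ Suc n) y = f ((f ^^ n) y)" by simp
  have att1: "attracting_fixed_point N D f x1"
    unfolding attracting_fixed_point_def
  proof (intro conjI exI)
    show "x1 \<in> D" using Dm x1_def by simp
    show "f x1 = x1" using fx x1_def by simp
    show "N 0 < 1" using N0 by simp
    show "has_pderiv N D f x1 0" unfolding has_pderiv_def
    proof (intro conjI allI impI)
      show "x1 \<in> D" using Dm x1_def by simp
      fix e :: real assume e: "e > 0"
      show "\<exists>\<delta>>0. \<forall>y\<in>D. 0 < N (y - x1) \<and> N (y - x1) < \<delta> \<longrightarrow> N ((f y - f x1) / (y - x1) - 0) < e"
      proof (intro exI conjI ballI impI)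
        show "min r0 (e/R) > 0" using r0p e R0 by simp
        fix y assume "y \<in> D" and hy: "0 < N (y - x1) \<and> N (y - x1) < min r0 (e/R)"
        then have y0: "N y > 0" "N y < r0" "N y < e/R" using x1_def by auto
        have "(f y - f x1) / (y - x1) - 0 = f y / y" using fx x1_def by simp
        then have "N ((f y - f x1) / (y - x1) - 0) = R * N y ^ 2 / N y" using S1[OF y0(2)] Ndv by simp
        also have "\<dots> = R * N y" using y0 by (simp add: power2_eq_square)
        also have "\<dots> < e" using y0(3) R0 by (simp add: field_simps)
        finally show "N ((f y - f x1) / (y - x1) - 0) < e" .
      qed
    qed
  qed
  have att2: "attracting_fixed_point N D f x2"
    unfolding attracting_fixed_point_def
  proof (intro conjI exI)
    show "x2 \<in> D" using Dm bx2 a0 x2e by auto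
    show "f x2 = x2" using fx2 .
    show "N ((2*a-b)/a) < 1" using Ndv Na k1 k_def by simp
    show "has_pderiv N D f x2 ((2*a-b)/a)" unfolding has_pderiv_def
    proof (intro conjI allI impI)
      show "x2 \<in> D" using Dm bx2 a0 x2e by auto
      fix e :: real assume e: "e > 0"
      show "\<exists>\<delta>>0. \<forall>y\<in>D. 0 < N (y - x2) \<and> N (y - x2) < \<delta> \<longrightarrow> N ((f y - f x2) / (y - x2) - (2*a-b)/a) < e"
      proof (intro exI conjI ballI impI)
        show "min r0 (e/R) > 0" using r0p e R0 by simp
        fix y assume "y \<in> D" and hy: "0 < N (y - x2) \<and> N (y - x2) < min r0 (e/R)"
        then have y0: "N (y-x2) > 0" "N (y-x2) < r0" "N (y-x2) < e/R" by auto
        have nz: "b*y+1 \<noteq> 0" using S2[OF y0(2)] by simp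
        have e1: "b*y+1 = b*(y-x2) + a*x2" using bx2 by (simp add: algebra_simps)
        have lt: "R * N (y-x2) < 1" using y0(2) R0 Rr0 by (metis mult_strict_left_mono)
        have "N (b*(y-x2)) < N (a*x2)" using Nm[of b "y-x2"] R_def lt Nax2 by simp
        then have ebn: "N (b*y+1) = 1" using Nae Nax2 e1 by metis
        have yx: "y - x2 \<noteq> 0" using y0 N0 by auto
        have "f y - f x2 = (y - x2) * (a*y+1)/(b*y+1)" using i1[OF nz x2e] fx fx2 by simp
        then have "(f y - f x2) / (y - x2) = (a*y+1)/(b*y+1)" using yx by simp
        then have "(f y - f x2) / (y - x2) - (2*a-b)/a = (a-b)^2 * (y - x2) / (a*(b*y+1))"
          using i3[OF nz x2e a0] by simp
        then have "N ((f y - f x2) / (y - x2) - (2*a-b)/a) = R^2 * N (y-x2) / R"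
          using Ndv Nm Npw Nab Na ebn by simp
        also have "\<dots> = R * N (y-x2)" using R0 by (simp add: power2_eq_square)
        also have "\<dots> < e" using y0(3) R0 by (simp add: field_simps)
        finally show "N ((f y - f x2) / (y - x2) - (2*a-b)/a) < e" .
      qed
    qed
  qed
  have bas1: "basin N D f x1 = pball N x1 r0"
  proof (intro set_eqI iffI)
    fix y assume "y \<in> basin N D f x1"
    then have inD: "\<And>n. (f ^^ n) y \<in> D" and lim: "(\<lambda>n. N ((f ^^ n) y - x1)) \<longlonglongrightarrow> 0"
      unfolding basin_def by auto
    show "y \<in> pball N x1 r0"
    proof (rule ccontr)
      assume "y \<notin> pball N x1 r0"
      then have y0: "N y \<ge> r0" unfolding pball_def x1_def by simp
      have "\<And>n. N ((f ^^ n) y) \<ge> r0"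
      proof -
        fix n show "N ((f ^^ n) y) \<ge> r0"
        proof (induction n)
          case 0 then show ?case using y0 by simp
        next
          case (Suc n) then show ?case using L1 inD[of n] Dm it by simp
        qed
      qed
      then have "r0 \<le> 0" using LIMSEQ_le_const[OF lim] x1_def by simp
      then show False using r0p by simp
    qed
  next
    fix y assume "y \<in> pball N x1 r0"
    then have yt: "N y < r0" unfolding pball_def x1_def by simp
    define t where "t = N y"
    define q where "q = R * t"
    have q0: "0 \<le> q" using q_def t_def R0 Nn by simp
    have "R*t < R*r0" using yt R0 t_def by simp
    then have q1: "q < 1" using q_def Rr0 by simp
    have t0: "t \<ge> 0" using t_def Nn by simp
    have bnd: "\<And>n. N ((f ^^ n) y) \<le> q^n * t"
    proof -
      fix n show "N ((f ^^ n) y) \<le> q^n * t"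
      proof (induction n)
        case 0 then show ?case using t_def by simp
      next
        case (Suc n)
        define z where "z = (f ^^ n) y"
        have "q^n * t \<le> t" using mult_left_le_one_le[OF t0 zero_le_power[OF q0] power_le_one[OF q0 less_imp_le[OF q1]]] .
        then have zt: "N z \<le> t" using Suc z_def by simp
        then have zr: "N z < r0" using yt t_def by simp
        have "N (f z) = (R * N z) * N z" using S1[OF zr] by (simp add: power2_eq_square)
        also have "\<dots> \<le> q * (q^n * t)" using zt Suc z_def R0 Nn[of z] q_def q0
          by (intro mult_mono) auto
        finally show ?case using z_def it by simp
      qed
    qed
    have inD: "\<And>n. (f ^^ n) y \<in> D"
    proof -
      fix n
      have "q^n * t \<le> t" using mult_left_le_one_le[OF t0 zero_le_power[OF q0] power_le_one[OF q0 less_imp_le[OF q1]]] .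
      then have "N ((f ^^ n) y) \<le> t" using bnd[of n] by simp
      then have "N ((f ^^ n) y) < r0" using yt t_def by simp
      then show "(f ^^ n) y \<in> D" using S1 Dm by blast
    qed
    have "(\<lambda>n. N ((f ^^ n) y - x1)) \<longlonglongrightarrow> 0"
      using geo[OF q0 q1, of "\<lambda>n. N ((f ^^ n) y - x1)" t] bnd Nn x1_def by simp
    then show "y \<in> basin N D f x1" unfolding basin_def using inD by simp
  qed
  have bas2: "basin N D f x2 = pball N x2 r0"
  proof (intro set_eqI iffI)
    fix y assume "y \<in> basin N D f x2"
    then have inD: "\<And>n. (f ^^ n) y \<in> D" and lim: "(\<lambda>n. N ((f ^^ n) y - x2)) \<longlonglongrightarrow> 0"
      unfolding basin_def by auto
    show "y \<in> pball N x2 r0"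
    proof (rule ccontr)
      assume "y \<notin> pball N x2 r0"
      then have y0: "N (y-x2) \<ge> r0" unfolding pball_def by simp
      have "\<And>n. N ((f ^^ n) y - x2) \<ge> r0"
      proof -
        fix n show "N ((f ^^ n) y - x2) \<ge> r0"
        proof (induction n)
          case 0 then show ?case using y0 by simp
        next
          case (Suc n) then show ?case using L2 inD[of n] Dm it by simp
        qed
      qed
      then have "r0 \<le> 0" using LIMSEQ_le_const[OF lim] by simp
      then show False using r0p by simp
    qed
  next
    fix y assume "y \<in> pball N x2 r0"
    then have yt: "N (y-x2) < r0" unfolding pball_def by simp
    define t where "t = N (y-x2)"
    define q where "q = max k (R * t)"
    have q0: "0 \<le> q" using q_def k0 by simp
    have "R*t < R*r0" using yt R0 t_def by simp
    then have q1: "q < 1" using q_def Rr0 k1 by simp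
    have t0: "t \<ge> 0" using t_def Nn by simp
    have bnd: "\<And>n. N ((f ^^ n) y - x2) \<le> q^n * t"
    proof -
      fix n show "N ((f ^^ n) y - x2) \<le> q^n * t"
      proof (induction n)
        case 0 then show ?case using t_def by simp
      next
        case (Suc n)
        define z where "z = (f ^^ n) y"
        have "q^n * t \<le> t" using mult_left_le_one_le[OF t0 zero_le_power[OF q0] power_le_one[OF q0 less_imp_le[OF q1]]] .
        then have zt: "N (z-x2) \<le> t" using Suc z_def by simp
        then have zr: "N (z-x2) < r0" using yt t_def by simp
        have "R * N (z-x2) \<le> R * t" using zt R0 by simp
        then have mq: "max k (R * N (z-x2)) \<le> q" unfolding q_def by (rule max.mono[OF order_refl])
        have "N (f z - x2) \<le> N (z-x2) * max k (R * N (z-x2))" using S2[OF zr] by simp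
        also have "\<dots> \<le> (q^n * t) * q" using Suc z_def mq Nn[of "z-x2"] q0 k0
          by (intro mult_mono) auto
        finally show ?case using z_def it by (simp add: mult_ac)
      qed
    qed
    have inD: "\<And>n. (f ^^ n) y \<in> D"
    proof -
      fix n
      have "q^n * t \<le> t" using mult_left_le_one_le[OF t0 zero_le_power[OF q0] power_le_one[OF q0 less_imp_le[OF q1]]] .
      then have "N ((f ^^ n) y - x2) \<le> t" using bnd[of n] by simp
      then have "N ((f ^^ n) y - x2) < r0" using yt t_def by simp
      then show "(f ^^ n) y \<in> D" using S2 Dm by blast
    qed
    have "(\<lambda>n. N ((f ^^ n) y - x2)) \<longlonglongrightarrow> 0"
      using geo[OF q0 q1, of "\<lambda>n. N ((f ^^ n) y - x2)" t] bnd Nn by simp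
    then show "y \<in> basin N D f x2" unfolding basin_def using inD by simp
  qed
  show ?thesis using att1 att2 bas1 bas2 by simp
qed

end
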